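(* For every $\lambda$ in $$\Omega=\{\lambda\in\mathbb D:\ \mathrm{Re}(\lambda)\ge0,\ \mathrm{Im}(\lambda)\ge0\}\setminus B_{\sqrt3/2}(1/2)=\{\lambda\in\mathbb D:\ 0\le\mathrm{Re}(\lambda)\le|\lambda|^2-\tfrac12\},$$ the set $A_\lambda$ has non-empty interior.
   Context: $\mathbb D$ is the open unit disc; $B_r(z_0)$ is the open disc of radius $r$ centered at $z_0$. $A_\lambda=\{\sum_{n\ge0}a_n\lambda^n:a_n\in\{-1,1\}\}$, the attractor of the iterated function system $\{\lambda z-1,\lambda z+1\}$. *)

theory Defs
  imports "HOL-Analysis.Analysis"
begin

definition attractor :: "complex \<Rightarrow> complex set" where
  "attractor l = {(\<Sum>n. of_int (a n) * l ^ n) | a. \<forall>n. a n \<in> {-1, 1::int}}"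

definition Omega :: "complex set" where
  "Omega = {l. norm l < 1 \<and> Re l \<ge> 0 \<and> Im l \<ge> 0} - ball (1/2) (sqrt 3 / 2)"

end

theory Submission
  imports Defs
begin

lemma omega_facts:
  assumes "l \<in> Omega"
  shows "Im l > 0" "Re l \<ge> 0" "norm l < 1" "1 + 2 * Re l \<le> 2 * ((Re l)^2 + (Im l)^2)"
proof -
  have n: "norm l < 1" and c: "Re l \<ge> 0" and s0: "Im l \<ge> 0"
    and nb: "\<not> dist (1/2) l < sqrt 3 / 2" using assms by (auto simp: Omega_def)
  have "dist (1/2) l \<ge> sqrt 3 / 2" using nb by simp
  hence "(dist (1/2) l)^2 \<ge> (sqrt 3 / 2)^2" by (intro power_mono) auto
  moreover have "(dist (1/2) l)^2 = (1/2 - Re l)^2 + (Im l)^2"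
    by (simp add: dist_norm cmod_power2)
  moreover have "(sqrt 3 / 2)^2 = 3/4" by (simp add: power_divide)
  ultimately have key: "(1/2 - Re l)^2 + (Im l)^2 \<ge> 3/4" by simp
  thus "1 + 2 * Re l \<le> 2 * ((Re l)^2 + (Im l)^2)" by (simp add: power2_eq_square algebra_simps)
  have "norm l ^2 < 1" using n by (simp add: power_less_one_iff)
  hence r1: "(Re l)^2 + (Im l)^2 < 1" by (simp add: cmod_power2)
  show "Im l > 0"
  proof (rule ccontr)
    assume "\<not> Im l > 0" hence "Im l = 0" using s0 by simp
    have "Re l \<le> 1" using n abs_Re_le_cmod[of l] by linarith
    hence "Re l * (1 - Re l) \<ge> 0" using c by simp
    hence "(1/2 - Re l)^2 \<le> 1/4" by (simp add: power2_eq_square algebra_simps)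
    with key \<open>Im l = 0\<close> show False by simp
  qed
  show "Re l \<ge> 0" "norm l < 1" using n c by auto
qed

theorem mainTheorem11:
  assumes "l \<in> Omega"
  shows "interior (attractor l) \<noteq> {}"
proof -
  define c where "c = Re l"
  define s where "s = Im l"
  define \<rho> where "\<rho> = c^2 + s^2"
  define Y where "Y = 1 / \<rho>"
  have s: "s > 0" and c: "c \<ge> 0" and nl: "norm l < 1" and key: "1 + 2*c \<le> 2*\<rho>"
    using omega_facts[OF assms] by (auto simp: c_def s_def \<rho>_def)
  have \<rho>: "\<rho> > 0" using s unfolding \<rho>_def by (simp add: add_nonneg_pos)
  have Y: "Y > 0" using \<rho> by (simp add: Y_def)
  have \<rho>Y: "\<rho> * Y = 1" using \<rho> by (simp add: Y_def)
  have Y12: "Y * (1 + 2*c) \<le> 2"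
  proof -
    have "Y * (1 + 2*c) \<le> Y * (2*\<rho>)" using key Y by (intro mult_left_mono) auto
    moreover have "Y * (2*\<rho>) = 2 * (\<rho> * Y)" by (simp add: algebra_simps)
    ultimately show ?thesis using \<rho>Y by simp
  qed
  define P where "P z \<longleftrightarrow> \<bar>Im z\<bar> \<le> Y * s \<and> \<bar>Re z + c * Im z / s\<bar> \<le> Y" for z
  have step: "\<exists>a z'. a \<in> {-1, 1::int} \<and> P z' \<and> z = l * z' + of_int a" if Pz: "P z" for z
  proof -
    define v where "v = Im z / s"
    define u where "u = Re z - c * v"
    define a :: int where "a = (if u \<ge> 0 then 1 else -1)"
    define w where "w = (of_int a - u) / \<rho>"
    define z' where "z' = Complex (v - c * w) (w * s)"
    have vY: "\<bar>v\<bar> \<le> Y" using Pz s unfolding P_def v_def by (simp add: abs_div divide_le_eq mult.commute)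
    have rel: "Re z + c * Im z / s = u + 2 * c * v" unfolding u_def v_def by simp
    have "abs u \<le> abs (u + 2 * c * v) + 2 * c * abs v"
    proof -
      have "abs (2 * c * v) = 2 * c * abs v" using c by (simp add: abs_mult)
      moreover have "abs u \<le> abs (u + 2 * c * v) + abs (2 * c * v)" by linarith
      ultimately show ?thesis by simp
    qed
    also have "\<dots> \<le> Y + 2*c*Y" using Pz vY c unfolding P_def rel
      by (intro add_mono mult_left_mono) auto
    also have "\<dots> \<le> 2" using Y12 by (simp add: algebra_simps)
    finally have u2: "\<bar>u\<bar> \<le> 2" .
    have au: "\<bar>of_int a - u\<bar> \<le> 1" using u2 unfolding a_def by auto
    have wY: "\<bar>w\<bar> \<le> Y"
    proof -
      have "\<bar>w\<bar> = \<bar>of_int a - u\<bar> / \<rho>" using \<rho> by (simp add: w_def abs_div)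
      also have "\<dots> \<le> 1 / \<rho>" using au \<rho> by (intro divide_right_mono) auto
      finally show ?thesis by (simp add: Y_def)
    qed
    have e1: "Im z' = w * s" by (simp add: z'_def)
    have e2: "Re z' + c * (w * s) / s = v" using s by (simp add: z'_def)
    have "abs (w * s) \<le> Y * s" using wY s by (simp add: abs_mult)
    hence Pz': "P z'" unfolding P_def e1 e2 using vY by simp
    have \<rho>w: "\<rho> * w = of_int a - u" using \<rho> by (simp add: w_def)
    have eq: "z = l * z' + of_int a"
    proof (rule complex_eqI)
      have "Re (l * z' + of_int a) = c * (v - c * w) - s * (w * s) + of_int a"
        by (simp add: z'_def c_def s_def)
      also have "\<dots> = c * v - \<rho> * w + of_int a" by (simp add: \<rho>_def power2_eq_square algebra_simps)
      also have "\<dots> = Re z" using \<rho>w by (simp add: u_def)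
      finally show "Re z = Re (l * z' + of_int a)" by simp
      have "Im (l * z' + of_int a) = c * (w * s) + s * (v - c * w)"
        by (simp add: z'_def c_def s_def)
      also have "\<dots> = s * v" by (simp add: algebra_simps)
      also have "\<dots> = Im z" using s by (simp add: v_def)
      finally show "Im z = Im (l * z' + of_int a)" by simp
    qed
    show ?thesis using Pz' eq a_def by (intro exI[of _ a] exI[of _ z']) auto
  qed
  have bound: "norm z \<le> Y * (1 + c + s)" if "P z" for z
  proof -
    have i: "\<bar>Im z\<bar> \<le> Y * s" using that by (simp add: P_def)
    have "\<bar>c * Im z / s\<bar> = c * (\<bar>Im z\<bar> / s)" using c s by (simp add: abs_mult abs_div)
    also have "\<dots> \<le> c * Y" using i s c by (intro mult_left_mono) (auto simp: divide_le_eq)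
    finally have t1: "\<bar>c * Im z / s\<bar> \<le> c * Y" .
    have "abs (Re z) \<le> abs (Re z + c * Im z / s) + abs (c * Im z / s)" using abs_triangle_ineq4[of "Re z + c * Im z / s" "c * Im z / s"] by simp
    hence "\<bar>Re z\<bar> \<le> Y + c * Y" using that t1 unfolding P_def by (meson add_mono order_trans)
    hence "norm z \<le> Y + c*Y + Y * s" using i cmod_le[of z] by linarith
    thus ?thesis by (simp add: algebra_simps)
  qed
  have inA: "z \<in> attractor l" if Pz: "P z" for z
  proof -
    from step have "\<forall>z. \<exists>p. P z \<longrightarrow> fst p \<in> {-1, 1::int} \<and> P (snd p) \<and> z = l * snd p + of_int (fst p)"
      by auto
    then obtain F where F: "\<And>z. P z \<Longrightarrow> fst (F z) \<in> {-1, 1::int} \<and> P (snd (F z)) \<and> z = l * snd (F z) + of_int (fst (F z))"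
      by metis
    define zs where "zs n = ((snd o F) ^^ n) z" for n
    define a where "a n = fst (F (zs n))" for n
    have zsS: "zs (Suc n) = snd (F (zs n))" for n by (simp add: zs_def)
    have Pzs: "P (zs n)" for n
      by (induction n) (auto simp: zs_def Pz F)
    have a1: "a n \<in> {-1, 1}" for n using F[OF Pzs[of n]] by (simp add: a_def)
    have rec: "zs n = l * zs (Suc n) + of_int (a n)" for n
      using F[OF Pzs[of n]] by (simp add: a_def zsS)
    have ps: "z = (\<Sum>k<n. of_int (a k) * l^k) + l^n * zs n" for n
    proof (induction n)
      case 0 then show ?case by (simp add: zs_def)
    next
      case (Suc n)
      have "l^n * zs n = l^n * of_int (a n) + l^Suc n * zs (Suc n)"
        by (subst rec) (simp add: algebra_simps)
      with Suc show ?case by (simp add: algebra_simps)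
    qed
    have t0: "(\<lambda>n. l^n * zs n) \<longlonglongrightarrow> 0"
    proof (rule Lim_null_comparison)
      show "\<forall>\<^sub>F n in sequentially. norm (l^n * zs n) \<le> norm l ^ n * (Y * (1 + c + s))"
        using bound[OF Pzs] by (intro always_eventually allI) (auto simp: norm_mult norm_power intro!: mult_left_mono)
      show "(\<lambda>n. norm l ^ n * (Y * (1 + c + s))) \<longlonglongrightarrow> 0"
        using nl by (intro tendsto_mult_left_zero LIMSEQ_power_zero) auto
    qed
    have "(\<lambda>n. z - l^n * zs n) \<longlonglongrightarrow> z - 0"
      by (intro tendsto_diff tendsto_const t0)
    moreover have "(\<lambda>n. \<Sum>k<n. of_int (a k) * l^k) = (\<lambda>n. z - l^n * zs n)"
      by (rule ext) (metis add_diff_cancel_right' ps)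
    ultimately have "(\<lambda>n. \<Sum>k<n. of_int (a k) * l^k) \<longlonglongrightarrow> z" by simp
    hence "(\<lambda>k. of_int (a k) * l^k) sums z" by (simp add: sums_def)
    hence "z = (\<Sum>k. of_int (a k) * l^k)" by (simp add: sums_unique)
    thus ?thesis using a1 unfolding attractor_def by blast
  qed
  define r where "r = Y * s / (s + c + 1)"
  have r: "r > 0" using Y s c by (simp add: r_def)
  have ballP: "ball (0::complex) r \<subseteq> {z. P z}"
  proof
    fix z :: complex assume "z \<in> ball 0 r"
    hence zr: "norm z < r" by simp
    have r1: "r \<le> Y * s" using Y s c by (simp add: r_def divide_le_eq mult_le_cancel_left)
    have r3: "r * (s + c + 1) = Y * s" using s c by (simp add: r_def)
    have "r * (s + c) \<le> r * (s + c + 1)" using r by (intro mult_left_mono) auto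
    hence r2: "r * (s + c) \<le> Y * s" using r3 by simp
    have im: "\<bar>Im z\<bar> < r" using abs_Im_le_cmod[of z] zr by linarith
    have re: "\<bar>Re z\<bar> < r" using abs_Re_le_cmod[of z] zr by linarith
    have "\<bar>c * Im z / s\<bar> = c * \<bar>Im z\<bar> / s" using c s by (simp add: abs_mult abs_div)
    also have "\<dots> \<le> c * r / s" using im c s by (intro divide_right_mono mult_left_mono) auto
    finally have "\<bar>Re z + c * Im z / s\<bar> \<le> r + c * r / s" using re by linarith
    also have "r + c * r / s = r * (s + c) / s" using s by (simp add: field_simps)
    also have "\<dots> \<le> Y" using r2 s by (simp add: divide_le_eq mult.commute)
    finally show "z \<in> {z. P z}" using im r1 by (simp add: P_def)
  qed
  have "ball (0::complex) r \<subseteq> interior (attractor l)"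
    using ballP inA by (intro interior_maximal) auto
  thus ?thesis using r by auto
qed

end
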